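(* Let $S$ be a dense subsemigroup of $((0,\infty),+)$, let $(X,\langle T_s\rangle_{s\in S})$ be a dynamical system and let $x,y\in X$. If $x$ and $y$ are proximal near zero, then there is a minimal left ideal $L$ of $O^{+}(S)$ such that $T_u(x)=T_u(y)$ for all $u\in L$.
   Context: "Dense" means dense in the usual topology of $(0,\infty)$. $\beta S$ is the Stone–Čech compactification of the discrete set $S$ (ultrafilters on $S$), with $+$ extended so that $(\beta S,+)$ is a compact right topological semigroup: $A\in p+q$ iff $\{x\in S:-x+A\in q\}\in p$, where $-x+A=\{y\in S:x+y\in A\}$. $O^{+}(S)=\{p\in\beta S: S\cap(0,\epsilon)\in p\text{ for every }\epsilon>0\}$, a compact right topological subsemigroup of $\beta S$. A dynamical system $(X,\langle T_s\rangle_{s\in S})$ consists of a compact Hausdorff space $X$ and continuous maps $T_s:X\to X$ with $T_s\circ T_t=T_{s+t}$. For $p\in\beta S$, $T_p(x)=p\text{-}\lim_{s\in S}T_s(x)$ (the continuous extension of $s\mapsto T_s$ to $\beta S$ into $X^X$); $T_p\circ T_q=T_{p+q}$. Points $x,y\in X$ are proximal near zero iff for every neighbourhood $U$ of the diagonal in $X\times X$ and every $\epsilon>0$ there exists $s\in S\cap(0,\epsilon)$ with $(T_s(x),T_s(y))\in U$. *)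

theory Defs
  imports "HOL-Analysis.Analysis"
begin

definition dense_subsemigroup_pos :: "real set \<Rightarrow> bool" where
  "dense_subsemigroup_pos S \<longleftrightarrow>
     S \<subseteq> {0<..} \<and> (\<forall>s\<in>S. \<forall>t\<in>S. s + t \<in> S) \<and>
     (\<forall>a b. 0 < a \<and> a < b \<longrightarrow> (\<exists>s\<in>S. a < s \<and> s < b))"

definition ultrafilter_on :: "'a set \<Rightarrow> 'a set set \<Rightarrow> bool" where
  "ultrafilter_on S p \<longleftrightarrow>
     (\<forall>A\<in>p. A \<subseteq> S) \<and> S \<in> p \<and> {} \<notin> p \<and>
     (\<forall>A\<in>p. \<forall>B\<in>p. A \<inter> B \<in> p) \<and>
     (\<forall>A B. A \<in> p \<and> A \<subseteq> B \<and> B \<subseteq> S \<longrightarrow> B \<in> p) \<and>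
     (\<forall>A. A \<subseteq> S \<longrightarrow> A \<in> p \<or> S - A \<in> p)"

text \<open>The Stone-Cech compactification beta S (as a set of ultrafilters).\<close>
definition betaS :: "'a set \<Rightarrow> 'a set set set" where
  "betaS S = {p. ultrafilter_on S p}"

definition lshift :: "real set \<Rightarrow> real \<Rightarrow> real set \<Rightarrow> real set" where
  "lshift S x A = {y\<in>S. x + y \<in> A}"

definition bplus :: "real set \<Rightarrow> real set set \<Rightarrow> real set set \<Rightarrow> real set set" where
  "bplus S p q = {A. A \<subseteq> S \<and> {x\<in>S. lshift S x A \<in> q} \<in> p}"

definition Oplus :: "real set \<Rightarrow> real set set set" where
  "Oplus S = {p \<in> betaS S. \<forall>\<epsilon>>0. S \<inter> {0<..<\<epsilon>} \<in> p}"

definition left_ideal :: "'b set \<Rightarrow> ('b \<Rightarrow> 'b \<Rightarrow> 'b) \<Rightarrow> 'b set \<Rightarrow> bool" where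
  "left_ideal M f L \<longleftrightarrow> L \<noteq> {} \<and> L \<subseteq> M \<and> (\<forall>p\<in>M. \<forall>q\<in>L. f p q \<in> L)"

definition minimal_left_ideal :: "'b set \<Rightarrow> ('b \<Rightarrow> 'b \<Rightarrow> 'b) \<Rightarrow> 'b set \<Rightarrow> bool" where
  "minimal_left_ideal M f L \<longleftrightarrow> left_ideal M f L \<and>
     (\<forall>L'. left_ideal M f L' \<and> L' \<subseteq> L \<longrightarrow> L' = L)"

definition plim :: "'a set \<Rightarrow> 'a set set \<Rightarrow> ('a \<Rightarrow> 'x::topological_space) \<Rightarrow> 'x" where
  "plim S p f = (THE z. \<forall>U. open U \<and> z \<in> U \<longrightarrow> {s\<in>S. f s \<in> U} \<in> p)"

definition Tbeta :: "real set \<Rightarrow> (real \<Rightarrow> 'x \<Rightarrow> 'x::topological_space) \<Rightarrow> real set set \<Rightarrow> 'x \<Rightarrow> 'x" where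
  "Tbeta S T p x = plim S p (\<lambda>s. T s x)"

definition dyn_system :: "real set \<Rightarrow> (real \<Rightarrow> 'x \<Rightarrow> 'x::t2_space) \<Rightarrow> bool" where
  "dyn_system S T \<longleftrightarrow> compact (UNIV :: 'x set) \<and>
     (\<forall>s\<in>S. continuous_on UNIV (T s)) \<and>
     (\<forall>s\<in>S. \<forall>t\<in>S. T s \<circ> T t = T (s + t))"

definition diag_nbhd :: "('x::topological_space \<times> 'x) set \<Rightarrow> bool" where
  "diag_nbhd U \<longleftrightarrow> (\<exists>V. open V \<and> (\<forall>z. (z, z) \<in> V) \<and> V \<subseteq> U)"

definition proximal_near_zero :: "real set \<Rightarrow> (real \<Rightarrow> 'x \<Rightarrow> 'x::topological_space) \<Rightarrow> 'x \<Rightarrow> 'x \<Rightarrow> bool" where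
  "proximal_near_zero S T x y \<longleftrightarrow>
     (\<forall>U \<epsilon>. diag_nbhd U \<and> \<epsilon> > 0 \<longrightarrow> (\<exists>s\<in>S. 0 < s \<and> s < \<epsilon> \<and> (T s x, T s y) \<in> U))"

end

theory Submission
  imports Defs
begin

lemma ufD: assumes "ultrafilter_on S p" shows "\<forall>A\<in>p. A \<subseteq> S" "S\<in>p" "{}\<notin>p"
  "\<forall>A\<in>p. \<forall>B\<in>p. A \<inter> B \<in> p" "\<forall>A B. A \<in> p \<and> A \<subseteq> B \<and> B \<subseteq> S \<longrightarrow> B \<in> p"
  "\<forall>A. A \<subseteq> S \<longrightarrow> A \<in> p \<or> S - A \<in> p"
  apply (insert assms, unfold ultrafilter_on_def, elim conjE, assumption)+ done

lemma uf_sub: "ultrafilter_on S p \<Longrightarrow> A \<in> p \<Longrightarrow> A \<subseteq> S"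
  using ufD(1) by blast
lemma uf_S: "ultrafilter_on S p \<Longrightarrow> S \<in> p"
  using ufD(2) by blast
lemma uf_empty: "ultrafilter_on S p \<Longrightarrow> {} \<notin> p"
  using ufD(3) by blast
lemma uf_int: "ultrafilter_on S p \<Longrightarrow> A \<in> p \<Longrightarrow> B \<in> p \<Longrightarrow> A \<inter> B \<in> p"
  using ufD(4) by blast
lemma uf_mono: "ultrafilter_on S p \<Longrightarrow> A \<in> p \<Longrightarrow> A \<subseteq> B \<Longrightarrow> B \<subseteq> S \<Longrightarrow> B \<in> p"
  using ufD(5) by blast
lemma uf_compl: "ultrafilter_on S p \<Longrightarrow> A \<subseteq> S \<Longrightarrow> A \<in> p \<or> S - A \<in> p"
  using ufD(6) by blast
lemma uf_not: "ultrafilter_on S p \<Longrightarrow> A \<subseteq> S \<Longrightarrow> (S - A \<in> p \<longleftrightarrow> A \<notin> p)"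
proof
  assume u: "ultrafilter_on S p" "A \<subseteq> S" "S - A \<in> p"
  show "A \<notin> p"
  proof
    assume "A \<in> p"
    hence "A \<inter> (S - A) \<in> p" using u uf_int by blast
    moreover have "A \<inter> (S - A) = {}" by blast
    ultimately show False using u uf_empty by metis
  qed
next
  assume "ultrafilter_on S p" "A \<subseteq> S" "A \<notin> p"
  thus "S - A \<in> p" using uf_compl by blast
qed

lemma uf_finite_Inter:
  assumes u: "ultrafilter_on S p" and "finite F" "F \<subseteq> p"
  shows "S \<inter> \<Inter>F \<in> p"
  using assms(2,3)
proof (induction F rule: finite_induct)
  case empty thus ?case using u uf_S by simp
next
  case (insert A F)
  have "(S \<inter> \<Inter>F) \<inter> A \<in> p" using insert u uf_int by auto
  moreover have "(S \<inter> \<Inter>F) \<inter> A = S \<inter> \<Inter>(insert A F)" by auto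
  ultimately show ?case by simp
qed

lemma uf_fip:
  assumes u: "ultrafilter_on S p" and "finite F" "F \<subseteq> p"
  shows "\<exists>s\<in>S. \<forall>A\<in>F. s \<in> A"
proof -
  have "S \<inter> \<Inter>F \<in> p" using uf_finite_Inter assms by blast
  hence "S \<inter> \<Inter>F \<noteq> {}" using u uf_empty by metis
  thus ?thesis by auto
qed

lemma uf_subset_eq:
  assumes p: "ultrafilter_on S p" and q: "ultrafilter_on S q" and "p \<subseteq> q"
  shows "p = q"
proof
  show "q \<subseteq> p"
  proof
    fix A assume "A \<in> q"
    hence A: "A \<subseteq> S" using q uf_sub by blast
    show "A \<in> p"
    proof (rule ccontr)
      assume "A \<notin> p"
      hence "S - A \<in> p" using p A uf_not by blast
      hence "S - A \<in> q" using \<open>p \<subseteq> q\<close> by blast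
      thus False using q A \<open>A \<in> q\<close> uf_not by blast
    qed
  qed
qed (use assms in auto)

definition fip :: "'a set \<Rightarrow> 'a set set \<Rightarrow> bool" where
  "fip S H \<longleftrightarrow> (\<forall>F. finite F \<and> F \<subseteq> H \<longrightarrow> (\<exists>s\<in>S. \<forall>A\<in>F. s \<in> A))"

lemma fip_insert:
  assumes "\<And>F. finite F \<Longrightarrow> F \<subseteq> M \<Longrightarrow> \<exists>s\<in>S. s \<in> A \<and> (\<forall>B\<in>F. s \<in> B)"
  shows "fip S (insert A M)"
  unfolding fip_def
proof (intro allI impI)
  fix F assume F: "finite F \<and> F \<subseteq> insert A M"
  then obtain s where "s \<in> S" "s \<in> A" "\<forall>B\<in>F - {A}. s \<in> B"
    using assms[of "F - {A}"] by auto
  thus "\<exists>s\<in>S. \<forall>A\<in>F. s \<in> A" by blast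
qed

lemma ultrafilter_exists:
  assumes G: "G \<subseteq> Pow S" and f: "fip S G"
  shows "\<exists>p. ultrafilter_on S p \<and> G \<subseteq> p"
proof -
  define \<A> where "\<A> = {H. G \<subseteq> H \<and> H \<subseteq> Pow S \<and> fip S H}"
  have "\<exists>M\<in>\<A>. \<forall>X\<in>\<A>. M \<subseteq> X \<longrightarrow> X = M"
  proof (rule subset_Zorn)
    fix C assume ch: "subset.chain \<A> C"
    show "\<exists>U\<in>\<A>. \<forall>X\<in>C. X \<subseteq> U"
    proof (cases "C = {}")
      case True thus ?thesis using G f unfolding \<A>_def by auto
    next
      case False
      have CA: "C \<subseteq> \<A>" using ch by (simp add: subset.chain_def)
      have HC: "G \<subseteq> H" "H \<subseteq> Pow S" "fip S H" if "H \<in> C" for H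
        using CA that unfolding \<A>_def by auto
      have "\<Union>C \<in> \<A>"
      proof -
        from False obtain H where "H \<in> C" by blast
        hence "G \<subseteq> \<Union>C" using HC(1) by (meson Union_upper order_trans)
        moreover have "\<Union>C \<subseteq> Pow S" using HC(2) by (simp add: Union_least)
        moreover have "fip S (\<Union>C)"
          unfolding fip_def
        proof (intro allI impI)
          fix F assume F: "finite F \<and> F \<subseteq> \<Union>C"
          then obtain B where "B \<in> C" "F \<subseteq> B"
            using finite_subset_Union_chain[of F C \<A>] False ch by metis
          moreover have "fip S B" using \<open>B \<in> C\<close> HC by auto
          ultimately show "\<exists>s\<in>S. \<forall>A\<in>F. s \<in> A" using F unfolding fip_def by blast
        qed
        ultimately show ?thesis unfolding \<A>_def by simp
      qed
      thus ?thesis by blast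
    qed
  qed
  then obtain M where M: "M \<in> \<A>" and max: "\<And>X. X \<in> \<A> \<Longrightarrow> M \<subseteq> X \<Longrightarrow> X = M" by blast
  have GM: "G \<subseteq> M" and MS: "M \<subseteq> Pow S" and fM: "fip S M" using M unfolding \<A>_def by auto
  have ins: "A \<in> M" if "A \<subseteq> S" "fip S (insert A M)" for A
  proof -
    have "insert A M \<in> \<A>" using that GM MS unfolding \<A>_def by auto
    hence "insert A M = M" using max by blast
    thus ?thesis by blast
  qed
  have fipM: "\<exists>s\<in>S. \<forall>B\<in>F. s \<in> B" if "finite F" "F \<subseteq> M" for F
    using fM that unfolding fip_def by blast
  have "ultrafilter_on S M"
    unfolding ultrafilter_on_def
  proof (intro conjI ballI allI impI)
    fix A assume "A \<in> M" thus "A \<subseteq> S" using MS by blast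
  next
    show "S \<in> M"
    proof (rule ins)
      show "fip S (insert S M)"
      proof (rule fip_insert)
        fix F assume "finite F" "F \<subseteq> M"
        then obtain s where "s \<in> S" "\<forall>B\<in>F. s \<in> B" using fipM by blast
        thus "\<exists>s\<in>S. s \<in> S \<and> (\<forall>B\<in>F. s \<in> B)" by blast
      qed
    qed simp
  next
    show "{} \<notin> M" using fipM[of "{{}}"] by auto
  next
    fix A B assume AB: "A \<in> M" "B \<in> M"
    show "A \<inter> B \<in> M"
    proof (rule ins)
      show "A \<inter> B \<subseteq> S" using AB MS by blast
      show "fip S (insert (A \<inter> B) M)"
      proof (rule fip_insert)
        fix F assume "finite F" "F \<subseteq> M"
        then obtain s where "s \<in> S" "\<forall>C\<in>insert A (insert B F). s \<in> C"
          using fipM[of "insert A (insert B F)"] AB by auto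
        thus "\<exists>s\<in>S. s \<in> A \<inter> B \<and> (\<forall>B\<in>F. s \<in> B)" by auto
      qed
    qed
  next
    fix A B assume AB: "A \<in> M \<and> A \<subseteq> B \<and> B \<subseteq> S"
    show "B \<in> M"
    proof (rule ins)
      show "B \<subseteq> S" using AB by blast
      show "fip S (insert B M)"
      proof (rule fip_insert)
        fix F assume "finite F" "F \<subseteq> M"
        then obtain s where "s \<in> S" "\<forall>C\<in>insert A F. s \<in> C"
          using fipM[of "insert A F"] AB by auto
        thus "\<exists>s\<in>S. s \<in> B \<and> (\<forall>B\<in>F. s \<in> B)" using AB by auto
      qed
    qed
  next
    fix A assume AS: "A \<subseteq> S"
    show "A \<in> M \<or> S - A \<in> M"
    proof (rule ccontr)
      assume "\<not> (A \<in> M \<or> S - A \<in> M)"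
      hence n1: "\<not> fip S (insert A M)" and n2: "\<not> fip S (insert (S - A) M)"
        using ins[of A] ins[of "S - A"] AS by blast+
      obtain F1 where F1: "finite F1" "F1 \<subseteq> M" "\<not> (\<exists>s\<in>S. s \<in> A \<and> (\<forall>B\<in>F1. s \<in> B))"
        using n1 fip_insert[of M S A] by metis
      obtain F2 where F2: "finite F2" "F2 \<subseteq> M" "\<not> (\<exists>s\<in>S. s \<in> S - A \<and> (\<forall>B\<in>F2. s \<in> B))"
        using n2 fip_insert[of M S "S - A"] by metis
      obtain s where "s \<in> S" "\<forall>B\<in>F1 \<union> F2. s \<in> B" using fipM[of "F1 \<union> F2"] F1 F2 by auto
      thus False using F1(3) F2(3) by blast
    qed
  qed
  thus ?thesis using GM by blast
qed

lemma lshift_sub: "lshift S x A \<subseteq> S" by (auto simp: lshift_def)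
lemma lshift_mono: "A \<subseteq> B \<Longrightarrow> lshift S x A \<subseteq> lshift S x B" by (auto simp: lshift_def)
lemma lshift_Int: "lshift S x (A \<inter> B) = lshift S x A \<inter> lshift S x B" by (auto simp: lshift_def)
lemma lshift_empty: "lshift S x {} = {}" by (auto simp: lshift_def)
lemma lshift_S: "\<forall>s\<in>S. \<forall>t\<in>S. s + t \<in> S \<Longrightarrow> x \<in> S \<Longrightarrow> lshift S x S = S"
  by (auto simp: lshift_def)
lemma lshift_Diff: "\<forall>s\<in>S. \<forall>t\<in>S. s + t \<in> S \<Longrightarrow> x \<in> S \<Longrightarrow> lshift S x (S - A) = S - lshift S x A"
  by (auto simp: lshift_def)

lemma bplus_mem: "A \<in> bplus S p q \<longleftrightarrow> A \<subseteq> S \<and> {x\<in>S. lshift S x A \<in> q} \<in> p"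
  by (simp add: bplus_def)

lemma bplus_uf:
  assumes add: "\<forall>s\<in>S. \<forall>t\<in>S. s + t \<in> S"
    and p: "ultrafilter_on S p" and q: "ultrafilter_on S q"
  shows "ultrafilter_on S (bplus S p q)"
  unfolding ultrafilter_on_def
proof (intro conjI ballI allI impI)
  fix A assume "A \<in> bplus S p q" thus "A \<subseteq> S" by (simp add: bplus_mem)
next
  have "{x\<in>S. lshift S x S \<in> q} = S" using lshift_S[OF add] uf_S[OF q] by auto
  thus "S \<in> bplus S p q" using uf_S[OF p] by (simp add: bplus_mem)
next
  have e: "{x\<in>S. lshift S x {} \<in> q} = {}" using uf_empty[OF q] by (simp add: lshift_empty)
  show "{} \<notin> bplus S p q" unfolding bplus_mem e using uf_empty[OF p] by simp
next
  fix A B assume A: "A \<in> bplus S p q" and B: "B \<in> bplus S p q"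
  hence AS: "A \<subseteq> S" "B \<subseteq> S" and Ap: "{x\<in>S. lshift S x A \<in> q} \<in> p"
    and Bp: "{x\<in>S. lshift S x B \<in> q} \<in> p" by (auto simp: bplus_mem)
  have "{x\<in>S. lshift S x A \<in> q} \<inter> {x\<in>S. lshift S x B \<in> q} \<subseteq> {x\<in>S. lshift S x (A \<inter> B) \<in> q}"
    using uf_int[OF q] by (auto simp: lshift_Int)
  hence "{x\<in>S. lshift S x (A \<inter> B) \<in> q} \<in> p"
    using uf_int[OF p Ap Bp] uf_mono[OF p] by blast
  thus "A \<inter> B \<in> bplus S p q" using AS by (auto simp: bplus_mem)
next
  fix A B assume h: "A \<in> bplus S p q \<and> A \<subseteq> B \<and> B \<subseteq> S"
  hence Ap: "{x\<in>S. lshift S x A \<in> q} \<in> p" by (simp add: bplus_mem)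
  have "{x\<in>S. lshift S x A \<in> q} \<subseteq> {x\<in>S. lshift S x B \<in> q}"
    using h uf_mono[OF q] lshift_mono[of A B S] lshift_sub[of S _ B] by blast
  hence "{x\<in>S. lshift S x B \<in> q} \<in> p" using uf_mono[OF p Ap] by blast
  thus "B \<in> bplus S p q" using h by (simp add: bplus_mem)
next
  fix A :: "real set" assume AS: "A \<subseteq> S"
  define Q where "Q = {x\<in>S. lshift S x A \<in> q}"
  have "{x\<in>S. lshift S x (S - A) \<in> q} = S - Q"
  proof -
    have "{x\<in>S. lshift S x (S - A) \<in> q} = {x\<in>S. S - lshift S x A \<in> q}"
      using lshift_Diff[OF add] by auto
    also have "\<dots> = {x\<in>S. lshift S x A \<notin> q}"
      using uf_not[OF q lshift_sub] by auto
    finally show ?thesis unfolding Q_def by auto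
  qed
  moreover have "Q \<in> p \<or> S - Q \<in> p" using uf_compl[OF p] Q_def by auto
  ultimately show "A \<in> bplus S p q \<or> S - A \<in> bplus S p q"
    using AS by (auto simp: bplus_mem Q_def)
qed

lemma Oplus_uf: "p \<in> Oplus S \<Longrightarrow> ultrafilter_on S p"
  by (simp add: Oplus_def betaS_def)

lemma OplusI: "ultrafilter_on S p \<Longrightarrow> (\<And>e. e > 0 \<Longrightarrow> S \<inter> {0<..<e} \<in> p) \<Longrightarrow> p \<in> Oplus S"
  by (simp add: Oplus_def betaS_def)

lemma OplusD: "p \<in> Oplus S \<Longrightarrow> e > 0 \<Longrightarrow> S \<inter> {0<..<e} \<in> p"
  by (simp add: Oplus_def)

lemma bplus_Oplus:
  assumes add: "\<forall>s\<in>S. \<forall>t\<in>S. s + t \<in> S" and pos: "S \<subseteq> {0<..}"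
    and p: "p \<in> Oplus S" and q: "q \<in> Oplus S"
  shows "bplus S p q \<in> Oplus S"
proof (rule OplusI)
  show "ultrafilter_on S (bplus S p q)" using bplus_uf[OF add Oplus_uf[OF p] Oplus_uf[OF q]] .
next
  fix e :: real assume e: "e > 0"
  have "S \<inter> {0<..<e} \<subseteq> {x\<in>S. lshift S x (S \<inter> {0<..<e}) \<in> q}"
  proof
    fix x assume x: "x \<in> S \<inter> {0<..<e}"
    have "S \<inter> {0<..<e - x} \<subseteq> lshift S x (S \<inter> {0<..<e})"
      using x add pos by (auto simp: lshift_def)
    moreover have "S \<inter> {0<..<e - x} \<in> q" using OplusD[OF q] x by auto
    ultimately have "lshift S x (S \<inter> {0<..<e}) \<in> q"
      using uf_mono[OF Oplus_uf[OF q]] lshift_sub by blast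
    thus "x \<in> {x\<in>S. lshift S x (S \<inter> {0<..<e}) \<in> q}" using x by auto
  qed
  hence "{x\<in>S. lshift S x (S \<inter> {0<..<e}) \<in> q} \<in> p"
    using uf_mono[OF Oplus_uf[OF p] OplusD[OF p e]] by blast
  thus "S \<inter> {0<..<e} \<in> bplus S p q" by (simp add: bplus_mem)
qed

lemma bplus_assoc:
  assumes add: "\<forall>s\<in>S. \<forall>t\<in>S. s + t \<in> S"
  shows "bplus S r (bplus S q v) = bplus S (bplus S r q) v"
proof -
  have key: "lshift S s {w\<in>S. lshift S w A \<in> v} = {t\<in>S. lshift S t (lshift S s A) \<in> v}"
    if s: "s \<in> S" for s A
  proof -
    have "lshift S t (lshift S s A) = lshift S (s + t) A" if t: "t \<in> S" for t
      using s t add by (auto simp: lshift_def add.assoc)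
    thus ?thesis using s add by (auto simp: lshift_def)
  qed
  show ?thesis
  proof (rule set_eqI)
    fix A
    have "{s\<in>S. lshift S s A \<in> bplus S q v} = {s\<in>S. lshift S s {w\<in>S. lshift S w A \<in> v} \<in> q}"
      using key by (auto simp: bplus_mem lshift_sub)
    thus "A \<in> bplus S r (bplus S q v) \<longleftrightarrow> A \<in> bplus S (bplus S r q) v"
      by (auto simp: bplus_mem)
  qed
qed

lemma plim_unique:
  fixes f :: "'a \<Rightarrow> 'x::t2_space"
  assumes p: "ultrafilter_on S p" and z: "\<forall>U. open U \<and> z \<in> U \<longrightarrow> {s\<in>S. f s \<in> U} \<in> p"
  shows "plim S p f = z"
  unfolding plim_def
proof (rule the_equality)
  show "\<forall>U. open U \<and> z \<in> U \<longrightarrow> {s\<in>S. f s \<in> U} \<in> p" by fact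
next
  fix w assume w: "\<forall>U. open U \<and> w \<in> U \<longrightarrow> {s\<in>S. f s \<in> U} \<in> p"
  show "w = z"
  proof (rule ccontr)
    assume "w \<noteq> z"
    then obtain U V where UV: "open U" "open V" "w \<in> U" "z \<in> V" "U \<inter> V = {}"
      using hausdorff[of w z] by blast
    have "{s\<in>S. f s \<in> U} \<in> p" using w UV by simp
    moreover have "{s\<in>S. f s \<in> V} \<in> p" using z UV by simp
    ultimately have "{s\<in>S. f s \<in> U} \<inter> {s\<in>S. f s \<in> V} \<in> p" using uf_int[OF p] by blast
    moreover have "{s\<in>S. f s \<in> U} \<inter> {s\<in>S. f s \<in> V} = {}" using UV by auto
    ultimately show False using uf_empty[OF p] by metis
  qed
qed

lemma plim_exists:
  fixes f :: "'a \<Rightarrow> 'x::t2_space"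
  assumes p: "ultrafilter_on S p" and c: "compact (UNIV::'x set)"
  shows "\<exists>z. \<forall>U. open U \<and> z \<in> U \<longrightarrow> {s\<in>S. f s \<in> U} \<in> p"
proof (rule ccontr)
  assume "\<nexists>z. \<forall>U. open U \<and> z \<in> U \<longrightarrow> {s\<in>S. f s \<in> U} \<in> p"
  hence "\<forall>z. \<exists>U. open U \<and> z \<in> U \<and> {s\<in>S. f s \<in> U} \<notin> p" by blast
  hence "\<exists>W. \<forall>z. open (W z) \<and> z \<in> W z \<and> {s\<in>S. f s \<in> W z} \<notin> p" by (rule choice)
  then obtain W where W0: "\<forall>z. open (W z) \<and> z \<in> W z \<and> {s\<in>S. f s \<in> W z} \<notin> p" by blast
  hence W: "\<And>z. open (W z)" "\<And>z. z \<in> W z" "\<And>z. {s\<in>S. f s \<in> W z} \<notin> p" by auto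
  have cov: "UNIV \<subseteq> (\<Union>z\<in>UNIV. W z)" using W(2) by blast
  obtain K where K: "K \<subseteq> UNIV" "finite K" "UNIV \<subseteq> (\<Union>z\<in>K. W z)"
    by (rule compactE_image[OF c, of UNIV W, OF W(1) cov])
  define F where "F = (\<lambda>z. S - {s\<in>S. f s \<in> W z}) ` K"
  have "F \<subseteq> p" unfolding F_def using W(3) uf_not[OF p] by auto
  moreover have "finite F" using K(2) unfolding F_def by simp
  ultimately obtain s where s: "s \<in> S" "\<forall>A\<in>F. s \<in> A" using uf_fip[OF p] by blast
  obtain z where "z \<in> K" "f s \<in> W z" using K by blast
  thus False using s unfolding F_def by auto
qed

lemma plim_prop:
  fixes f :: "'a \<Rightarrow> 'x::t2_space"
  assumes p: "ultrafilter_on S p" and c: "compact (UNIV::'x set)"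
  shows "open U \<Longrightarrow> plim S p f \<in> U \<Longrightarrow> {s\<in>S. f s \<in> U} \<in> p"
proof -
  obtain z where z: "\<forall>U. open U \<and> z \<in> U \<longrightarrow> {s\<in>S. f s \<in> U} \<in> p"
    using plim_exists[OF p c] by blast
  have "plim S p f = z" using plim_unique[OF p z] .
  thus "open U \<Longrightarrow> plim S p f \<in> U \<Longrightarrow> {s\<in>S. f s \<in> U} \<in> p" using z by blast
qed

lemma Tbeta_comp:
  fixes T :: "real \<Rightarrow> 'x::t2_space \<Rightarrow> 'x"
  assumes add: "\<forall>s\<in>S. \<forall>t\<in>S. s + t \<in> S" and dyn: "dyn_system S T"
    and p: "ultrafilter_on S p" and q: "ultrafilter_on S q"
  shows "Tbeta S T (bplus S q p) x = Tbeta S T q (Tbeta S T p x)"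
proof -
  have c: "compact (UNIV::'x set)" using dyn by (simp add: dyn_system_def)
  have cont: "continuous_on UNIV (T s)" if "s \<in> S" for s using dyn that by (simp add: dyn_system_def)
  have comp: "T s (T t z) = T (s + t) z" if "s \<in> S" "t \<in> S" for s t z
  proof -
    have "T s \<circ> T t = T (s + t)" using dyn that by (simp add: dyn_system_def)
    thus ?thesis by (metis comp_apply)
  qed
  define w where "w = Tbeta S T p x"
  define z where "z = Tbeta S T q w"
  have "plim S (bplus S q p) (\<lambda>s. T s x) = z"
  proof (rule plim_unique[OF bplus_uf[OF add q p]], intro allI impI)
    fix U assume U: "open U \<and> z \<in> U"
    define A where "A = {u\<in>S. T u x \<in> U}"
    have Q: "{s\<in>S. T s w \<in> U} \<in> q"
      using plim_prop[OF q c, of U "\<lambda>s. T s w"] U unfolding z_def Tbeta_def by simp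
    have "{s\<in>S. T s w \<in> U} \<subseteq> {s\<in>S. lshift S s A \<in> p}"
    proof
      fix s assume s: "s \<in> {s\<in>S. T s w \<in> U}"
      have "open (T s -` U)" using open_vimage[of U "T s"] U cont s by simp
      hence "{t\<in>S. T t x \<in> T s -` U} \<in> p"
        using plim_prop[OF p c, of "T s -` U" "\<lambda>t. T t x"] s unfolding w_def Tbeta_def by simp
      moreover have "{t\<in>S. T t x \<in> T s -` U} = lshift S s A"
        using s add comp unfolding A_def lshift_def by auto
      ultimately show "s \<in> {s\<in>S. lshift S s A \<in> p}" using s by simp
    qed
    hence "{s\<in>S. lshift S s A \<in> p} \<in> q" using uf_mono[OF q Q] by blast
    thus "{s\<in>S. T s x \<in> U} \<in> bplus S q p" by (simp add: bplus_mem A_def)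
  qed
  thus ?thesis unfolding z_def w_def Tbeta_def by simp
qed

lemma Haus_eu: "Hausdorff_space (euclidean :: 'x::t2_space topology)"
  unfolding Hausdorff_space_def by (metis disjnt_def hausdorff open_openin)

lemma reg_sep:
  fixes a :: "'x::t2_space"
  assumes "compact (UNIV::'x set)" "open U" "a \<in> U"
  shows "\<exists>A. open A \<and> a \<in> A \<and> closure A \<subseteq> U"
proof -
  have K: "compact (- U)" using assms compact_Int_closed[of UNIV "-U"] by (simp add: open_closed)
  have "compact {a}" by simp
  obtain A B where "openin euclidean A" "openin euclidean B" "{a} \<subseteq> A" "-U \<subseteq> B" "disjnt A B"
    using Hausdorff_space_compact_separation[of euclidean "{a}" "-U", OF Haus_eu] K assms
    by (auto simp: disjnt_iff)
  hence h: "open A" "open B" "a \<in> A" "-B \<subseteq> U" "A \<subseteq> -B"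
    by (auto simp: disjnt_iff)
  have "closure A \<subseteq> -B" using h by (intro closure_minimal) auto
  thus ?thesis using h by (intro exI[of _ A]) auto
qed

definition kerO :: "real set \<Rightarrow> real set set set \<Rightarrow> real set set" where
  "kerO S C = {A. A \<subseteq> S \<and> (\<forall>u\<in>C. A \<in> u)}"
definition closedO :: "real set \<Rightarrow> real set set set \<Rightarrow> bool" where
  "closedO S C \<longleftrightarrow> C \<subseteq> Oplus S \<and> (\<forall>u\<in>Oplus S. kerO S C \<subseteq> u \<longrightarrow> u \<in> C)"
definition Eps :: "real set \<Rightarrow> real set set" where
  "Eps S = (\<lambda>e. S \<inter> {0<..<e}) ` {0<..}"

lemma Eps_sub: "u \<in> Oplus S \<Longrightarrow> Eps S \<subseteq> u"
  unfolding Eps_def using OplusD by auto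
lemma Eps_Pow: "Eps S \<subseteq> Pow S" unfolding Eps_def by auto
lemma Oplus_of: "ultrafilter_on S q \<Longrightarrow> Eps S \<subseteq> q \<Longrightarrow> q \<in> Oplus S"
  by (rule OplusI) (auto simp: Eps_def)
lemma ker_anti: "C \<subseteq> D \<Longrightarrow> kerO S D \<subseteq> kerO S C"
  unfolding kerO_def by auto
lemma ker_in: "u \<in> C \<Longrightarrow> kerO S C \<subseteq> u"
  unfolding kerO_def by auto
lemma ker_Pow: "kerO S C \<subseteq> Pow S"
  unfolding kerO_def by auto
lemma closed_ker: "closedO S C \<Longrightarrow> D \<subseteq> Oplus S \<Longrightarrow> kerO S C \<subseteq> kerO S D \<Longrightarrow> D \<subseteq> C"
proof
  fix u assume c: "closedO S C" and D: "D \<subseteq> Oplus S" and k: "kerO S C \<subseteq> kerO S D" and u: "u \<in> D"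
  have "kerO S C \<subseteq> u" using k ker_in[OF u] by (rule order_trans)
  moreover have "u \<in> Oplus S" using D u by blast
  ultimately show "u \<in> C" using c unfolding closedO_def by blast
qed

lemma rideal_closed:
  assumes add: "\<forall>s\<in>S. \<forall>t\<in>S. s + t \<in> S" and pos: "S \<subseteq> {0<..}" and v: "v \<in> Oplus S"
  shows "closedO S ((\<lambda>q. bplus S q v) ` Oplus S)"
  unfolding closedO_def
proof (intro conjI ballI impI)
  let ?R = "(\<lambda>q. bplus S q v) ` Oplus S"
  have vu: "ultrafilter_on S v" using Oplus_uf[OF v] .
  show "?R \<subseteq> Oplus S" using bplus_Oplus[OF add pos _ v] by auto
  fix u assume u: "u \<in> Oplus S" and ku: "kerO S ?R \<subseteq> u"
  have uu: "ultrafilter_on S u" using Oplus_uf[OF u] .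
  define B where "B A = {s\<in>S. lshift S s A \<in> v}" for A
  define G where "G = B ` u \<union> Eps S"
  have GP: "G \<subseteq> Pow S" unfolding G_def B_def using Eps_Pow by auto
  have fG: "fip S G" unfolding fip_def
  proof (intro allI impI)
    fix F assume F: "finite F \<and> F \<subseteq> G"
    define F1 where "F1 = F \<inter> B ` u"
    define F2 where "F2 = F \<inter> Eps S"
    have "finite F1" "F1 \<subseteq> B ` u" using F unfolding F1_def by auto
    then obtain u' where u': "u' \<subseteq> u" "finite u'" "F1 = B ` u'"
      using finite_subset_image by metis
    define A0 where "A0 = S \<inter> \<Inter>u'"
    have A0u: "A0 \<in> u" unfolding A0_def using uf_finite_Inter[OF uu u'(2,1)] .
    have A0S: "A0 \<subseteq> S" unfolding A0_def by blast
    have "\<exists>q\<in>Oplus S. A0 \<in> bplus S q v"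
    proof (rule ccontr)
      assume "\<not> (\<exists>q\<in>Oplus S. A0 \<in> bplus S q v)"
      hence "\<forall>q\<in>Oplus S. S - A0 \<in> bplus S q v"
        using uf_not[OF bplus_uf[OF add Oplus_uf vu] A0S] by blast
      hence "S - A0 \<in> kerO S ?R" unfolding kerO_def by auto
      hence "S - A0 \<in> u" using ku by blast
      thus False using uf_not[OF uu A0S] A0u by blast
    qed
    then obtain q where q: "q \<in> Oplus S" "A0 \<in> bplus S q v" by blast
    have qu: "ultrafilter_on S q" using Oplus_uf[OF q(1)] .
    have BA0: "B A0 \<in> q" using q(2) unfolding B_def by (simp add: bplus_mem)
    have Bmono: "B A0 \<subseteq> B A" if "A \<in> u'" for A
    proof -
      have "A0 \<subseteq> A" using that unfolding A0_def by blast
      hence m: "lshift S s A \<in> v" if "lshift S s A0 \<in> v" for s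
        using uf_mono[OF vu that lshift_mono lshift_sub] by blast
      thus ?thesis unfolding B_def by auto
    qed
    have "insert (B A0) F2 \<subseteq> q" using BA0 Eps_sub[OF q(1)] unfolding F2_def by auto
    moreover have "finite (insert (B A0) F2)" using F unfolding F2_def by auto
    ultimately obtain s where s: "s \<in> S" "\<forall>X\<in>insert (B A0) F2. s \<in> X"
      using uf_fip[OF qu] by blast
    have "\<forall>X\<in>F. s \<in> X"
    proof
      fix X assume X: "X \<in> F"
      show "s \<in> X"
      proof (cases "X \<in> Eps S")
        case True thus ?thesis using s X unfolding F2_def by auto
      next
        case False
        hence "X \<in> F1" using X F unfolding F1_def G_def by auto
        then obtain A where "A \<in> u'" "X = B A" using u'(3) by auto
        thus ?thesis using Bmono s by auto
      qed
    qed
    thus "\<exists>s\<in>S. \<forall>A\<in>F. s \<in> A" using s(1) by blast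
  qed
  obtain q where q: "ultrafilter_on S q" "G \<subseteq> q" using ultrafilter_exists[OF GP fG] by blast
  have qO: "q \<in> Oplus S" using Oplus_of[OF q(1)] q(2) unfolding G_def by auto
  have "u \<subseteq> bplus S q v"
  proof
    fix A assume "A \<in> u"
    hence "B A \<in> q" "A \<subseteq> S" using q(2) uf_sub[OF uu] unfolding G_def by auto
    thus "A \<in> bplus S q v" unfolding B_def by (simp add: bplus_mem)
  qed
  hence "u = bplus S q v" using uf_subset_eq[OF uu bplus_uf[OF add q(1) vu]] by blast
  thus "u \<in> ?R" using qO by blast
qed

lemma rideal_left:
  assumes add: "\<forall>s\<in>S. \<forall>t\<in>S. s + t \<in> S" and pos: "S \<subseteq> {0<..}" and v: "v \<in> Oplus S"
  shows "left_ideal (Oplus S) (bplus S) ((\<lambda>q. bplus S q v) ` Oplus S)"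
  unfolding left_ideal_def
proof (intro conjI ballI)
  show "(\<lambda>q. bplus S q v) ` Oplus S \<noteq> {}" using v by blast
  show "(\<lambda>q. bplus S q v) ` Oplus S \<subseteq> Oplus S" using bplus_Oplus[OF add pos _ v] by auto
  fix r w assume r: "r \<in> Oplus S" and w: "w \<in> (\<lambda>q. bplus S q v) ` Oplus S"
  then obtain q where q: "q \<in> Oplus S" "w = bplus S q v" by blast
  have "bplus S r w = bplus S (bplus S r q) v" using q(2) bplus_assoc[OF add] by simp
  moreover have "bplus S r q \<in> Oplus S" using bplus_Oplus[OF add pos r q(1)] .
  ultimately show "bplus S r w \<in> (\<lambda>q. bplus S q v) ` Oplus S" by blast
qed

lemma min_exists:
  assumes add: "\<forall>s\<in>S. \<forall>t\<in>S. s + t \<in> S" and pos: "S \<subseteq> {0<..}"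
    and P: "left_ideal (Oplus S) (bplus S) P"
  shows "\<exists>L. minimal_left_ideal (Oplus S) (bplus S) L \<and> L \<subseteq> P"
proof -
  define R where "R v = (\<lambda>q. bplus S q v) ` Oplus S" for v
  define \<C> where "\<C> = {C. closedO S C \<and> left_ideal (Oplus S) (bplus S) C \<and> C \<subseteq> P}"
  have Pne: "P \<noteq> {}" and PO: "P \<subseteq> Oplus S" and Pcl: "\<And>r q. r \<in> Oplus S \<Longrightarrow> q \<in> P \<Longrightarrow> bplus S r q \<in> P"
    using P unfolding left_ideal_def by auto
  have RC: "R v \<in> \<C>" if "v \<in> L" "left_ideal (Oplus S) (bplus S) L" "L \<subseteq> P" for v L
  proof -
    have vO: "v \<in> Oplus S" using that unfolding left_ideal_def by auto
    have "R v \<subseteq> L" using that unfolding R_def left_ideal_def by auto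
    thus ?thesis using that rideal_closed[OF add pos vO] rideal_left[OF add pos vO]
      unfolding \<C>_def R_def by auto
  qed
  obtain p where p: "p \<in> P" using Pne by blast
  have RpC: "R p \<in> \<C>" using RC[OF p P] by blast
  have CC: "closedO S C" "left_ideal (Oplus S) (bplus S) C" "C \<subseteq> P" if "C \<in> \<C>" for C
    using that unfolding \<C>_def by auto
  have "\<exists>M\<in>kerO S ` \<C>. \<forall>X\<in>kerO S ` \<C>. M \<subseteq> X \<longrightarrow> X = M"
  proof (rule subset_Zorn)
    fix K assume ch: "subset.chain (kerO S ` \<C>) K"
    have KK: "K \<subseteq> kerO S ` \<C>" using ch by (simp add: subset.chain_def)
    show "\<exists>U\<in>kerO S ` \<C>. \<forall>X\<in>K. X \<subseteq> U"
    proof (cases "K = {}")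
      case True thus ?thesis using RpC by blast
    next
      case False
      define \<D> where "\<D> = {C\<in>\<C>. kerO S C \<in> K}"
      define I where "I = \<Inter>\<D>"
      obtain X0 where "X0 \<in> K" using False by blast
      then obtain C0 where C0: "C0 \<in> \<C>" "kerO S C0 \<in> K" using KK by blast
      hence C0D: "C0 \<in> \<D>" unfolding \<D>_def by blast
      have IC0: "I \<subseteq> C0" unfolding I_def using C0D by blast
      have IO: "I \<subseteq> Oplus S" using IC0 CC(1)[OF C0(1)] unfolding closedO_def by blast
      have IP: "I \<subseteq> P" using IC0 CC(3)[OF C0(1)] by blast
      define G where "G = \<Union>K \<union> Eps S"
      have UKP: "\<Union>K \<subseteq> Pow S"
      proof
        fix A assume "A \<in> \<Union>K"
        then obtain X where X: "X \<in> K" "A \<in> X" by blast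
        then obtain C where "X = kerO S C" using KK by blast
        thus "A \<in> Pow S" using ker_Pow X(2) by blast
      qed
      have GP: "G \<subseteq> Pow S" unfolding G_def using UKP Eps_Pow by (rule Un_least)
      have fG: "fip S G" unfolding fip_def
      proof (intro allI impI)
        fix F assume F: "finite F \<and> F \<subseteq> G"
        have "finite (F \<inter> \<Union>K)" "F \<inter> \<Union>K \<subseteq> \<Union>K" using F by auto
        then obtain X where X: "X \<in> K" "F \<inter> \<Union>K \<subseteq> X"
          using finite_subset_Union_chain[of "F \<inter> \<Union>K" K "kerO S ` \<C>"] False ch by metis
        then obtain C where C: "C \<in> \<C>" "X = kerO S C" using KK by blast
        have "C \<noteq> {}" using CC(2)[OF C(1)] unfolding left_ideal_def by blast
        then obtain u where u: "u \<in> C" by blast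
        have uO: "u \<in> Oplus S" using u CC(1)[OF C(1)] unfolding closedO_def by blast
        have "F \<subseteq> u"
        proof
          fix A assume A: "A \<in> F"
          show "A \<in> u"
          proof (cases "A \<in> Eps S")
            case True thus ?thesis using Eps_sub[OF uO] by blast
          next
            case False
            hence "A \<in> X" using A F X(2) unfolding G_def by blast
            thus ?thesis using C(2) ker_in[OF u] by blast
          qed
        qed
        thus "\<exists>s\<in>S. \<forall>A\<in>F. s \<in> A" using uf_fip[OF Oplus_uf[OF uO]] F by blast
      qed
      obtain q where q: "ultrafilter_on S q" "G \<subseteq> q" using ultrafilter_exists[OF GP fG] by blast
      have qO: "q \<in> Oplus S" using Oplus_of[OF q(1)] q(2) unfolding G_def by auto
      have qI: "q \<in> I" unfolding I_def
      proof
        fix C assume C: "C \<in> \<D>"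
        hence "kerO S C \<subseteq> q" using q(2) unfolding \<D>_def G_def by blast
        thus "q \<in> C" using CC(1) C qO unfolding \<D>_def closedO_def by blast
      qed
      have Icl: "closedO S I" unfolding closedO_def
      proof (intro conjI ballI impI)
        show "I \<subseteq> Oplus S" by (rule IO)
        fix u assume u: "u \<in> Oplus S" "kerO S I \<subseteq> u"
        show "u \<in> I" unfolding I_def
        proof
          fix C assume C: "C \<in> \<D>"
          have "I \<subseteq> C" using C unfolding I_def by blast
          hence "kerO S C \<subseteq> u" using ker_anti u(2) by blast
          thus "u \<in> C" using CC(1) C u(1) unfolding \<D>_def closedO_def by blast
        qed
      qed
      have Ili: "left_ideal (Oplus S) (bplus S) I" unfolding left_ideal_def
      proof (intro conjI ballI)
        show "I \<noteq> {}" using qI by blast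
        show "I \<subseteq> Oplus S" by (rule IO)
        fix r w assume r: "r \<in> Oplus S" and w: "w \<in> I"
        show "bplus S r w \<in> I" unfolding I_def
        proof
          fix C assume C: "C \<in> \<D>"
          hence "w \<in> C" using w unfolding I_def by blast
          moreover have "left_ideal (Oplus S) (bplus S) C" using CC(2) C unfolding \<D>_def by blast
          ultimately show "bplus S r w \<in> C" using r unfolding left_ideal_def by blast
        qed
      qed
      have IC: "I \<in> \<C>" unfolding \<C>_def using Icl Ili IP by blast
      have "\<forall>X\<in>K. X \<subseteq> kerO S I"
      proof
        fix X assume X: "X \<in> K"
        then obtain C where C: "C \<in> \<C>" "X = kerO S C" using KK by blast
        hence "C \<in> \<D>" using X unfolding \<D>_def by blast
        hence "I \<subseteq> C" unfolding I_def by blast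
        thus "X \<subseteq> kerO S I" using C(2) ker_anti by blast
      qed
      thus ?thesis using IC by blast
    qed
  qed
  then obtain C0 where C0: "C0 \<in> \<C>" and max: "\<And>C. C \<in> \<C> \<Longrightarrow> kerO S C0 \<subseteq> kerO S C \<Longrightarrow> kerO S C = kerO S C0"
    by blast
  have "minimal_left_ideal (Oplus S) (bplus S) C0" unfolding minimal_left_ideal_def
  proof (intro conjI allI impI)
    show "left_ideal (Oplus S) (bplus S) C0" using CC(2)[OF C0] .
    fix L assume L: "left_ideal (Oplus S) (bplus S) L \<and> L \<subseteq> C0"
    hence "L \<noteq> {}" unfolding left_ideal_def by blast
    then obtain v where v: "v \<in> L" by blast
    have LP: "L \<subseteq> P" using L CC(3)[OF C0] by blast
    have Rv: "R v \<in> \<C>" using RC[OF v _ LP] L by blast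
    have RvL: "R v \<subseteq> L" using v L unfolding R_def left_ideal_def by auto
    have "kerO S C0 \<subseteq> kerO S (R v)" using ker_anti RvL L by blast
    hence "kerO S (R v) = kerO S C0" using max[OF Rv] by blast
    hence "C0 \<subseteq> R v" using closed_ker[OF CC(1)[OF Rv]] CC(1)[OF C0] unfolding closedO_def by blast
    thus "L = C0" using RvL L by blast
  qed
  thus ?thesis using CC(3)[OF C0] by blast
qed

lemma diag_UNIV: "diag_nbhd UNIV" unfolding diag_nbhd_def by auto
lemma diag_Int: "diag_nbhd W \<Longrightarrow> diag_nbhd W' \<Longrightarrow> diag_nbhd (W \<inter> W')"
proof -
  assume "diag_nbhd W" "diag_nbhd W'"
  then obtain V V' where "open V" "\<forall>z. (z, z) \<in> V" "V \<subseteq> W" "open V'" "\<forall>z. (z, z) \<in> V'" "V' \<subseteq> W'"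
    unfolding diag_nbhd_def by blast
  hence "open (V \<inter> V')" "\<forall>z. (z, z) \<in> V \<inter> V'" "V \<inter> V' \<subseteq> W \<inter> W'" by auto
  thus ?thesis unfolding diag_nbhd_def by blast
qed

lemma exists_p:
  fixes T :: "real \<Rightarrow> 'x::t2_space \<Rightarrow> 'x" and x y :: 'x
  assumes dyn: "dyn_system S T" and prox: "proximal_near_zero S T x y"
  shows "\<exists>p\<in>Oplus S. Tbeta S T p x = Tbeta S T p y"
proof -
  have c: "compact (UNIV::'x set)" using dyn by (simp add: dyn_system_def)
  define A where "A W e = {s\<in>S. 0 < s \<and> s < e \<and> (T s x, T s y) \<in> W}" for W and e :: real
  define G where "G = {A W e | W e. diag_nbhd W \<and> e > 0}"
  have GP: "G \<subseteq> Pow S" unfolding G_def A_def by auto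
  have ind: "finite F \<Longrightarrow> F \<subseteq> G \<Longrightarrow> \<exists>W e. diag_nbhd W \<and> e > 0 \<and> (\<forall>X\<in>F. A W e \<subseteq> X)" for F
  proof (induction F rule: finite_induct)
    case empty thus ?case using diag_UNIV by (intro exI[of _ UNIV] exI[of _ 1]) auto
  next
    case (insert X F)
    then obtain W e where We: "diag_nbhd W" "e > 0" "\<forall>X\<in>F. A W e \<subseteq> X" by auto
    from insert obtain W' e' where W'e': "X = A W' e'" "diag_nbhd W'" "e' > 0" unfolding G_def by auto
    have "A (W \<inter> W') (min e e') \<subseteq> A W e" "A (W \<inter> W') (min e e') \<subseteq> A W' e'"
      unfolding A_def by auto
    moreover have "diag_nbhd (W \<inter> W')" using diag_Int We(1) W'e'(2) .
    moreover have "min e e' > 0" using We(2) W'e'(3) by simp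
    ultimately show ?case using We(3) W'e'(1)
      by (intro exI[of _ "W \<inter> W'"] exI[of _ "min e e'"]) blast
  qed
  have fG: "fip S G" unfolding fip_def
  proof (intro allI impI)
    fix F assume F: "finite F \<and> F \<subseteq> G"
    then obtain W e where We: "diag_nbhd W" "e > 0" "\<forall>X\<in>F. A W e \<subseteq> X"
      using ind[of F] F by (elim conjE) blast
    have "\<forall>U \<epsilon>. diag_nbhd U \<and> \<epsilon> > 0 \<longrightarrow> (\<exists>s\<in>S. 0 < s \<and> s < \<epsilon> \<and> (T s x, T s y) \<in> U)"
      using prox unfolding proximal_near_zero_def .
    hence "\<exists>s\<in>S. 0 < s \<and> s < e \<and> (T s x, T s y) \<in> W" using We(1,2) by blast
    then obtain s where "s \<in> S" "0 < s" "s < e" "(T s x, T s y) \<in> W" by blast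
    hence "s \<in> A W e" unfolding A_def by simp
    thus "\<exists>s\<in>S. \<forall>X\<in>F. s \<in> X" using We(3) \<open>s \<in> S\<close> by blast
  qed
  obtain q where q: "ultrafilter_on S q" "G \<subseteq> q" using ultrafilter_exists[OF GP fG] by blast
  have AG: "A W e \<in> q" if "diag_nbhd W" "e > 0" for W e using q(2) that unfolding G_def by blast
  have qO: "q \<in> Oplus S"
  proof (rule OplusI[OF q(1)])
    fix e :: real assume e: "e > 0"
    have "A UNIV e \<subseteq> S \<inter> {0<..<e}" unfolding A_def by auto
    thus "S \<inter> {0<..<e} \<in> q" using uf_mono[OF q(1) AG[OF diag_UNIV e]] by blast
  qed
  define a where "a = Tbeta S T q x"
  define b where "b = Tbeta S T q y"
  have "a = b"
  proof (rule ccontr)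
    assume "a \<noteq> b"
    then obtain U V where UV: "open U" "open V" "a \<in> U" "b \<in> V" "U \<inter> V = {}"
      using hausdorff[of a b] by blast
    obtain A1 where A1: "open A1" "a \<in> A1" "closure A1 \<subseteq> U" using reg_sep[OF c UV(1,3)] by blast
    obtain A2 where A2: "open A2" "b \<in> A2" "closure A2 \<subseteq> V" using reg_sep[OF c UV(2,4)] by blast
    define W where "W = - (closure A1 \<times> closure A2)"
    have "open W" unfolding W_def by (intro open_Compl closed_Times closed_closure)
    moreover have "\<forall>z. (z, z) \<in> W" unfolding W_def using A1(3) A2(3) UV(5) by blast
    ultimately have dW: "diag_nbhd W" unfolding diag_nbhd_def by blast
    have X1: "{s\<in>S. T s x \<in> A1} \<in> q"
      using plim_prop[OF q(1) c A1(1), of "\<lambda>s. T s x"] A1(2) unfolding a_def Tbeta_def by simp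
    have X2: "{s\<in>S. T s y \<in> A2} \<in> q"
      using plim_prop[OF q(1) c A2(1), of "\<lambda>s. T s y"] A2(2) unfolding b_def Tbeta_def by simp
    have X3: "A W 1 \<in> q" using AG[OF dW] by simp
    obtain s where s: "s \<in> S" "\<forall>X\<in>{{s\<in>S. T s x \<in> A1}, {s\<in>S. T s y \<in> A2}, A W 1}. s \<in> X"
      using uf_fip[OF q(1), of "{{s\<in>S. T s x \<in> A1}, {s\<in>S. T s y \<in> A2}, A W 1}"] X1 X2 X3 by auto
    hence "T s x \<in> closure A1" "T s y \<in> closure A2" "(T s x, T s y) \<in> W"
      using closure_subset[of A1] closure_subset[of A2] unfolding A_def by auto
    thus False unfolding W_def by auto
  qed
  thus ?thesis using qO unfolding a_def b_def by blast
qed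

theorem lemma2p9:
  fixes S :: "real set" and T :: "real \<Rightarrow> 'x::t2_space \<Rightarrow> 'x" and x y :: 'x
  assumes "dense_subsemigroup_pos S"
    and "dyn_system S T"
    and "proximal_near_zero S T x y"
  shows "\<exists>L. minimal_left_ideal (Oplus S) (bplus S) L \<and>
             (\<forall>u\<in>L. Tbeta S T u x = Tbeta S T u y)"
proof -
  have pos: "S \<subseteq> {0<..}" and add: "\<forall>s\<in>S. \<forall>t\<in>S. s + t \<in> S"
    using assms(1) unfolding dense_subsemigroup_pos_def by auto
  define P where "P = {u\<in>Oplus S. Tbeta S T u x = Tbeta S T u y}"
  have "left_ideal (Oplus S) (bplus S) P" unfolding left_ideal_def
  proof (intro conjI ballI)
    show "P \<noteq> {}" using exists_p[OF assms(2,3)] unfolding P_def by blast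
    show "P \<subseteq> Oplus S" unfolding P_def by blast
    fix r u assume r: "r \<in> Oplus S" and u: "u \<in> P"
    have uO: "u \<in> Oplus S" and eq: "Tbeta S T u x = Tbeta S T u y" using u unfolding P_def by auto
    have "Tbeta S T (bplus S r u) x = Tbeta S T (bplus S r u) y"
      using Tbeta_comp[OF add assms(2) Oplus_uf[OF uO] Oplus_uf[OF r]] eq by metis
    thus "bplus S r u \<in> P" using bplus_Oplus[OF add pos r uO] unfolding P_def by blast
  qed
  then obtain L where "minimal_left_ideal (Oplus S) (bplus S) L" "L \<subseteq> P"
    using min_exists[OF add pos] by blast
  thus ?thesis unfolding P_def by blast
qed

end
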